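(* Suppose the OWA weights are nonincreasing, $v_1\ge v_2\ge\dots\ge v_K$, all processing times and weights are positive, and the deterministic problem $1|prec|\sum w_jC_j$ (for the class of precedence constraints under consideration) is solvable in polynomial time. Then \textsc{Min-Owa}~$1|prec|\sum w_jC_j$ is approximable within $K\cdot\min\{w_{\max}/w_{\min},\,p_{\max}/p_{\min}\}$, where $w_{\max}=\max_{j,i}w_j(S_i)$, $w_{\min}=\min_{j,i}w_j(S_i)$, $p_{\max}=\max_{j,i}p_j(S_i)$, $p_{\min}=\min_{j,i}p_j(S_i)$.
   Context: Single machine scheduling under scenarios. A set of jobs $J=\{1,\dots,n\}$ must be processed nonpreemptively on one machine, all jobs being available at time $0$; jobs may be subject to precedence constraints given by a partial order ($i\rightarrow j$ means job $j$ cannot start before job $i$ is completed). A schedule is a permutation $\pi$ of $J$ respecting the precedence constraints; $\Pi$ denotes the set of all schedules. A scenario set $\Gamma=\{S_1,\dots,S_K\}$, $K>1$, is given (part of the input); under scenario $S_i$ job $j$ has processing time $p_j(S_i)$ and weight $w_j(S_i)$. $C_j(\pi,S_i)$ is the sum of $p_k(S_i)$ over $k=j$ and all jobs $k$ preceding $j$ in $\pi$. The cost of $\pi$ under $S_i$ is $f(\pi,S_i)=\sum_{j\in J}w_j(S_i)C_j(\pi,S_i)$. The deterministic problem $1|prec|\sum w_jC_j$ asks, for given single processing times $p_j\ge0$ and weights $w_j\ge0$, for a schedule minimizing $\sum_j w_jC_j$. OWA criterion: given weights $\pmb v=(v_1,\dots,v_K)$ with $v_i\in[0,1]$ and $\sum_i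 v_i=1$, and reals $f_1,\dots,f_K$, let $\sigma$ be a permutation of $[K]$ with $f_{\sigma(1)}\ge\dots\ge f_{\sigma(K)}$ and set $\mathrm{owa}_{\pmb v}(f_1,\dots,f_K)=\sum_{i\in[K]}v_if_{\sigma(i)}$. Set $\mathrm{OWA}(\pi)=\mathrm{owa}_{\pmb v}(f(\pi,S_1),\dots,f(\pi,S_K))$; \textsc{Min-Owa}~$1|prec|\sum w_jC_j$ is $\min_{\pi\in\Pi}\mathrm{OWA}(\pi)$. A problem is approximable within $\rho$ if a polynomial-time algorithm returns a schedule $\pi$ with $\mathrm{OWA}(\pi)\le\rho\cdot\min_{\sigma\in\Pi}\mathrm{OWA}(\sigma)$. *)

theory Defs
  imports Complex_Main
begin

text \<open>Jobs form a finite set J; a precedence relation prec (pairs (i,j) meaning i -> j).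
  A schedule is a list enumerating J without repetition respecting prec.\<close>

definition feasible :: "'j set \<Rightarrow> ('j \<times> 'j) set \<Rightarrow> 'j list \<Rightarrow> bool" where
  "feasible J prec \<pi> \<longleftrightarrow> distinct \<pi> \<and> set \<pi> = J \<and>
     (\<forall>(i, j) \<in> prec. \<exists>a b c. \<pi> = a @ [i] @ b @ [j] @ c)"

definition compl :: "'j list \<Rightarrow> ('j \<Rightarrow> real) \<Rightarrow> 'j \<Rightarrow> real" where
  "compl \<pi> q j = sum_list (map q (takeWhile (\<lambda>x. x \<noteq> j) \<pi>)) + q j"

definition twc :: "'j set \<Rightarrow> ('j \<Rightarrow> real) \<Rightarrow> ('j \<Rightarrow> real) \<Rightarrow> 'j list \<Rightarrow> real" where
  "twc J q w \<pi> = (\<Sum>j\<in>J. w j * compl \<pi> q j)"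

text \<open>OWA of values f 0, ..., f (K-1) with weights v 0, ..., v (K-1):
  v 0 multiplies the largest value, etc.\<close>
definition owa :: "nat \<Rightarrow> (nat \<Rightarrow> real) \<Rightarrow> (nat \<Rightarrow> real) \<Rightarrow> real" where
  "owa K v f = (\<Sum>i<K. v i * (rev (sort (map f [0..<K]))) ! i)"

definition OWA :: "'j set \<Rightarrow> nat \<Rightarrow> (nat \<Rightarrow> real) \<Rightarrow> (nat \<Rightarrow> 'j \<Rightarrow> real)
    \<Rightarrow> (nat \<Rightarrow> 'j \<Rightarrow> real) \<Rightarrow> 'j list \<Rightarrow> real" where
  "OWA J K v p w \<pi> = owa K v (\<lambda>i. twc J (p i) (w i) \<pi>)"

text \<open>An exact oracle (polynomial algorithm) for the deterministic problem 1|prec|sum w_j C_j.\<close>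
definition det_oracle :: "'j set \<Rightarrow> ('j \<times> 'j) set
    \<Rightarrow> (('j \<Rightarrow> real) \<Rightarrow> ('j \<Rightarrow> real) \<Rightarrow> 'j list) \<Rightarrow> bool" where
  "det_oracle J prec solve \<longleftrightarrow>
     (\<forall>q w. (\<forall>j\<in>J. q j \<ge> 0 \<and> w j \<ge> 0) \<longrightarrow>
        feasible J prec (solve q w) \<and>
        (\<forall>\<sigma>. feasible J prec \<sigma> \<longrightarrow> twc J q w (solve q w) \<le> twc J q w \<sigma>))"

definition wmax where "wmax J K (w :: nat \<Rightarrow> 'j \<Rightarrow> real) = Max {w i j | i j. i < K \<and> j \<in> J}"
definition wmin where "wmin J K (w :: nat \<Rightarrow> 'j \<Rightarrow> real) = Min {w i j | i j. i < K \<and> j \<in> J}"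

text \<open>The approximation algorithm: one call to the deterministic oracle on an aggregated
  instance (linear-time preprocessing).\<close>
definition owa_approx :: "'j set \<Rightarrow> nat \<Rightarrow> (nat \<Rightarrow> 'j \<Rightarrow> real) \<Rightarrow> (nat \<Rightarrow> 'j \<Rightarrow> real)
    \<Rightarrow> (('j \<Rightarrow> real) \<Rightarrow> ('j \<Rightarrow> real) \<Rightarrow> 'j list) \<Rightarrow> 'j list" where
  "owa_approx J K p w solve =
     (if wmax J K w / wmin J K w \<le> wmax J K p / wmin J K p
      then solve (\<lambda>j. \<Sum>i<K. p i j) (\<lambda>j. 1)
      else solve (\<lambda>j. 1) (\<lambda>j. \<Sum>i<K. w i j))"

end

theory Submission
  imports Defs
begin

lemma sum_insort: "sum_list (insort (x::real) xs) = x + sum_list xs"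
  by (induct xs) auto
lemma sum_sort: "sum_list (sort (xs::real list)) = sum_list xs"
  by (induct xs) (auto simp: sum_insort)

lemma owa_facts:
  fixes f v :: "nat \<Rightarrow> real"
  assumes f0: "\<forall>i<K. 0 \<le> f i" and v: "\<forall>i<K. 0 \<le> v i \<and> v i \<le> 1" and vs: "(\<Sum>i<K. v i) = 1"
    and vm: "\<forall>i j. i \<le> j \<and> j < K \<longrightarrow> v j \<le> v i"
  shows "owa K v f \<le> (\<Sum>i<K. f i)" and "(\<Sum>i<K. f i) \<le> real K * owa K v f"
proof -
  define L where "L = rev (sort (map f [0..<K]))"
  have len: "length L = K" by (simp add: L_def)
  have sumL: "(\<Sum>i<K. L!i) = (\<Sum>i<K. f i)"
  proof -
    have "(\<Sum>i<K. L!i) = sum_list L" using len by (simp add: sum_list_sum_nth atLeast0LessThan)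
    also have "\<dots> = sum_list (map f [0..<K])" by (simp add: L_def sum_sort)
    also have "\<dots> = (\<Sum>i<K. f i)" by (simp add: sum_list_sum_nth atLeast0LessThan)
    finally show ?thesis .
  qed
  have Lnn: "\<And>i. i < K \<Longrightarrow> 0 \<le> L!i"
  proof -
    fix i assume "i < K"
    then have "L!i \<in> set L" using len by simp
    then have "L!i \<in> f ` {0..<K}" by (simp add: L_def)
    then show "0 \<le> L!i" using f0 by auto
  qed
  have Lmono: "\<And>i j. i \<le> j \<Longrightarrow> j < K \<Longrightarrow> L!j \<le> L!i"
    using sorted_rev_nth_mono[of L] len by (simp add: L_def)
  have owa_eq: "owa K v f = (\<Sum>i<K. v i * L!i)" by (simp add: owa_def L_def)
  show "owa K v f \<le> (\<Sum>i<K. f i)"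
    unfolding owa_eq sumL[symmetric]
    by (rule sum_mono) (use v Lnn in \<open>simp add: mult_left_le_one_le\<close>)
  have "of_nat K * (\<Sum>k=0..<K. (- v k) * L!k) \<le> (\<Sum>k=0..<K. - v k) * (\<Sum>k=0..<K. L!k)"
    by (rule Chebyshev_sum_upper) (use vm Lmono in auto)
  then show "(\<Sum>i<K. f i) \<le> real K * owa K v f"
    unfolding owa_eq sumL[symmetric] using vs
    by (simp add: atLeast0LessThan sum_negf)
qed

lemma compl_mono:
  assumes "\<forall>x\<in>J. q x \<le> q' x" "set xs \<subseteq> J" "j \<in> J"
  shows "compl xs q j \<le> compl xs q' j"
proof -
  have "sum_list (map q (takeWhile (\<lambda>x. x \<noteq> j) xs)) \<le> sum_list (map q' (takeWhile (\<lambda>x. x \<noteq> j) xs))"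
    by (rule sum_list_mono) (use assms in \<open>auto dest: set_takeWhileD\<close>)
  then show ?thesis unfolding compl_def using assms by (auto intro: add_mono)
qed

lemma compl_nonneg:
  assumes "\<forall>x\<in>J. 0 \<le> q x" "set xs \<subseteq> J" "j \<in> J"
  shows "0 \<le> compl xs q j"
  using compl_mono[of J "\<lambda>_. 0" q xs j] assms by (simp add: compl_def)

lemma compl_scale: "compl xs (\<lambda>x. c * q x) j = c * compl xs q j"
  unfolding compl_def by (simp add: sum_list_const_mult algebra_simps)

lemma sum_list_sumf: "sum_list (map (\<lambda>x. \<Sum>i<K. q i x) xs) = (\<Sum>i<K. sum_list (map (q i) xs))"
  by (induct xs) (auto simp: sum.distrib)

lemma compl_sum: "compl xs (\<lambda>x. \<Sum>i<K. q i x) j = (\<Sum>i<K. compl xs (q i) j)"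
  unfolding compl_def by (simp add: sum_list_sumf sum.distrib)

lemma bounds:
  fixes g :: "nat \<Rightarrow> 'j \<Rightarrow> real"
  assumes "finite J" "J \<noteq> {}" "K > 0" "\<forall>i<K. \<forall>j\<in>J. g i j > 0"
  shows "\<And>i j. i < K \<Longrightarrow> j \<in> J \<Longrightarrow> g i j \<le> wmax J K g \<and> wmin J K g \<le> g i j"
    and "wmin J K g > 0"
proof -
  have eq: "{g i j | i j. i < K \<and> j \<in> J} = (\<lambda>(i,j). g i j) ` ({..<K} \<times> J)" by auto
  have fin: "finite {g i j | i j. i < K \<and> j \<in> J}" unfolding eq using assms by simp
  have ne: "{g i j | i j. i < K \<and> j \<in> J} \<noteq> {}" using assms by auto
  show "\<And>i j. i < K \<Longrightarrow> j \<in> J \<Longrightarrow> g i j \<le> wmax J K g \<and> wmin J K g \<le> g i j"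
    unfolding wmax_def wmin_def using fin by (auto intro: Max_ge Min_le)
  have "wmin J K g \<in> {g i j | i j. i < K \<and> j \<in> J}" unfolding wmin_def using fin ne by (rule Min_in)
  then show "wmin J K g > 0" using assms by auto
qed

theorem theorem11:
  fixes J :: "'j set" and prec :: "('j \<times> 'j) set" and K :: nat
    and v :: "nat \<Rightarrow> real" and p w :: "nat \<Rightarrow> 'j \<Rightarrow> real"
    and solve :: "('j \<Rightarrow> real) \<Rightarrow> ('j \<Rightarrow> real) \<Rightarrow> 'j list"
  assumes "finite J" and "J \<noteq> {}"
    and "prec \<subseteq> J \<times> J" and "irrefl prec" and "trans prec"
    and "K > 1"
    and "\<forall>i<K. 0 \<le> v i \<and> v i \<le> 1" and "(\<Sum>i<K. v i) = 1"
    and "\<forall>i j. i \<le> j \<and> j < K \<longrightarrow> v j \<le> v i"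
    and "\<forall>i<K. \<forall>j\<in>J. p i j > 0 \<and> w i j > 0"
    and "det_oracle J prec solve"
  shows "feasible J prec (owa_approx J K p w solve) \<and>
         (\<forall>\<sigma>. feasible J prec \<sigma> \<longrightarrow>
            OWA J K v p w (owa_approx J K p w solve)
              \<le> real K * min (wmax J K w / wmin J K w) (wmax J K p / wmin J K p)
                * OWA J K v p w \<sigma>)"
proof -
  note A = assms
  define W where "W = wmax J K w"
  define w0 where "w0 = wmin J K w"
  define P where "P = wmax J K p"
  define p0 where "p0 = wmin J K p"
  have K0: "K > 0" using A by simp
  have pos: "\<forall>i<K. \<forall>j\<in>J. p i j > 0" "\<forall>i<K. \<forall>j\<in>J. w i j > 0" using A by auto
  have wb: "\<And>i j. i < K \<Longrightarrow> j \<in> J \<Longrightarrow> w i j \<le> W \<and> w0 \<le> w i j" and w0p: "w0 > 0"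
    using bounds[OF A(1,2) K0 pos(2)] unfolding W_def w0_def by auto
  have pb: "\<And>i j. i < K \<Longrightarrow> j \<in> J \<Longrightarrow> p i j \<le> P \<and> p0 \<le> p i j" and p0p: "p0 > 0"
    using bounds[OF A(1,2) K0 pos(1)] unfolding P_def p0_def by auto
  define f where "f i \<pi> = twc J (p i) (w i) \<pi>" for i \<pi>
  have OWAf: "OWA J K v p w \<pi> = owa K v (\<lambda>i. f i \<pi>)" for \<pi> by (simp add: OWA_def f_def)
  have fnn: "\<forall>i<K. 0 \<le> f i \<pi>" if "set \<pi> \<subseteq> J" for \<pi>
  proof (intro allI impI)
    fix i assume i: "i < K"
    have "\<forall>x\<in>J. 0 \<le> p i x" using pos i by (auto intro: less_imp_le)
    then have "\<And>j. j \<in> J \<Longrightarrow> 0 \<le> compl \<pi> (p i) j" using that by (rule compl_nonneg)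
    then show "0 \<le> f i \<pi>" unfolding f_def twc_def using pos i
      by (intro sum_nonneg) (simp add: less_imp_le)
  qed
  define \<pi> where "\<pi> = owa_approx J K p w solve"
  define R where "R = (if W / w0 \<le> P / p0 then W / w0 else P / p0)"
  have Rmin: "R = min (W / w0) (P / p0)" by (simp add: R_def min_def)
  have R0: "R \<ge> 0" using w0p p0p wb pb K0 A(2) unfolding R_def
    by (smt (verit) all_not_in_conv divide_nonneg_pos)
  have O: "\<And>q ww. \<forall>j\<in>J. q j \<ge> 0 \<and> ww j \<ge> 0 \<Longrightarrow> feasible J prec (solve q ww) \<and>
        (\<forall>\<sigma>. feasible J prec \<sigma> \<longrightarrow> twc J q ww (solve q ww) \<le> twc J q ww \<sigma>)"
    using A(11) unfolding det_oracle_def by blast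
  have Wnn: "W \<ge> 0" and Pnn: "P \<ge> 0"
    using wb pb pos K0 A(2) by (meson all_not_in_conv less_le_trans order.strict_implies_order)+
  define Ps where "Ps j = (\<Sum>i<K. p i j)" for j
  define Ws where "Ws j = (\<Sum>i<K. w i j)" for j
  have fsw: "(\<Sum>i<K. f i x) = (\<Sum>j\<in>J. \<Sum>i<K. w i j * compl x (p i) j)" for x
    unfolding f_def twc_def by (rule sum.swap)
  have feas: "feasible J prec \<pi>" and key: "\<And>\<sigma>. feasible J prec \<sigma> \<Longrightarrow> (\<Sum>i<K. f i \<pi>) \<le> R * (\<Sum>i<K. f i \<sigma>)"
  proof -
    have "feasible J prec \<pi> \<and> (\<forall>\<sigma>. feasible J prec \<sigma> \<longrightarrow> (\<Sum>i<K. f i \<pi>) \<le> R * (\<Sum>i<K. f i \<sigma>))"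
    proof (cases "W / w0 \<le> P / p0")
      case True
      have \<pi>eq: "\<pi> = solve Ps (\<lambda>j. 1)" unfolding \<pi>_def owa_approx_def Ps_def
        using True by (simp add: W_def w0_def P_def p0_def)
      have R: "R = W / w0" using True by (simp add: R_def)
      have pre: "\<forall>j\<in>J. Ps j \<ge> 0 \<and> (1::real) \<ge> 0"
        unfolding Ps_def using pos by (auto intro!: sum_nonneg simp: less_imp_le)
      note O1 = O[OF pre, folded \<pi>eq]
      have a: "(\<Sum>i<K. f i x) \<le> W * twc J Ps (\<lambda>j. 1) x" if "set x \<subseteq> J" for x
      proof -
        have "(\<Sum>i<K. f i x) \<le> (\<Sum>j\<in>J. \<Sum>i<K. W * compl x (p i) j)"
          unfolding fsw
        proof (intro sum_mono mult_right_mono)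
          fix j i assume "j \<in> J" "i \<in> {..<K}"
          then show "w i j \<le> W" using wb by auto
          show "0 \<le> compl x (p i) j" using compl_nonneg[of J "p i" x j] pos \<open>j \<in> J\<close> \<open>i \<in> {..<K}\<close> that
            by (auto intro: less_imp_le)
        qed
        also have "\<dots> = W * twc J Ps (\<lambda>j. 1) x"
          unfolding twc_def Ps_def compl_sum by (simp add: sum_distrib_left)
        finally show ?thesis .
      qed
      have b: "twc J Ps (\<lambda>j. 1) x \<le> (1 / w0) * (\<Sum>i<K. f i x)" if "set x \<subseteq> J" for x
      proof -
        have "twc J Ps (\<lambda>j. 1) x = (\<Sum>j\<in>J. \<Sum>i<K. compl x (p i) j)"
          unfolding twc_def Ps_def compl_sum by simp
        also have "\<dots> \<le> (\<Sum>j\<in>J. \<Sum>i<K. (1 / w0) * (w i j * compl x (p i) j))"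
        proof (intro sum_mono)
          fix j i assume j: "j \<in> J" and i: "i \<in> {..<K}"
          have c0: "0 \<le> compl x (p i) j" using compl_nonneg[of J "p i" x j] pos j i that
            by (auto intro: less_imp_le)
          have "1 \<le> w i j / w0" using wb[of i j] i j w0p by simp
          then have "1 * compl x (p i) j \<le> (w i j / w0) * compl x (p i) j"
            by (rule mult_right_mono[OF _ c0])
          then show "compl x (p i) j \<le> (1 / w0) * (w i j * compl x (p i) j)" by simp
        qed
        also have "\<dots> = (1 / w0) * (\<Sum>i<K. f i x)"
          unfolding fsw by (simp add: sum_distrib_left)
        finally show ?thesis .
      qed
      show ?thesis
      proof (intro conjI allI impI)
        show "feasible J prec \<pi>" using O1 by blast
        fix \<sigma> assume s: "feasible J prec \<sigma>"
        have sJ: "set \<sigma> \<subseteq> J" "set \<pi> \<subseteq> J" using s O1 by (auto simp: feasible_def)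
        have "(\<Sum>i<K. f i \<pi>) \<le> W * twc J Ps (\<lambda>j. 1) \<pi>" by (rule a[OF sJ(2)])
        also have "\<dots> \<le> W * twc J Ps (\<lambda>j. 1) \<sigma>" using O1 s Wnn by (simp add: mult_left_mono)
        also have "\<dots> \<le> W * ((1 / w0) * (\<Sum>i<K. f i \<sigma>))" using b[OF sJ(1)] Wnn by (rule mult_left_mono)
        finally show "(\<Sum>i<K. f i \<pi>) \<le> R * (\<Sum>i<K. f i \<sigma>)" by (simp add: R)
      qed
    next
      case False
      have \<pi>eq: "\<pi> = solve (\<lambda>j. 1) Ws" unfolding \<pi>_def owa_approx_def Ws_def
        using False by (simp add: W_def w0_def P_def p0_def)
      have R: "R = P / p0" using False by (simp add: R_def)
      have pre: "\<forall>j\<in>J. (1::real) \<ge> 0 \<and> Ws j \<ge> 0"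
        unfolding Ws_def using pos by (auto intro!: sum_nonneg simp: less_imp_le)
      note O1 = O[OF pre, folded \<pi>eq]
      have a: "(\<Sum>i<K. f i x) \<le> P * twc J (\<lambda>j. 1) Ws x" if "set x \<subseteq> J" for x
      proof -
        have "(\<Sum>i<K. f i x) \<le> (\<Sum>j\<in>J. \<Sum>i<K. w i j * (P * compl x (\<lambda>j. 1) j))"
          unfolding fsw
        proof (intro sum_mono mult_left_mono)
          fix j i assume j: "j \<in> J" and i: "i \<in> {..<K}"
          show "0 \<le> w i j" using pos i j by (auto intro: less_imp_le)
          have "compl x (p i) j \<le> compl x (\<lambda>y. P * 1) j"
            by (rule compl_mono[of J _ _ x j]) (use pb i j that in auto)
          then show "compl x (p i) j \<le> P * compl x (\<lambda>j. 1) j" by (simp only: compl_scale)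
        qed
        also have "\<dots> = P * twc J (\<lambda>j. 1) Ws x"
          unfolding twc_def Ws_def by (simp add: sum_distrib_left sum_distrib_right algebra_simps)
        finally show ?thesis .
      qed
      have b: "twc J (\<lambda>j. 1) Ws x \<le> (1 / p0) * (\<Sum>i<K. f i x)" if "set x \<subseteq> J" for x
      proof -
        have "twc J (\<lambda>j. 1) Ws x = (\<Sum>j\<in>J. \<Sum>i<K. w i j * compl x (\<lambda>j. 1) j)"
          unfolding twc_def Ws_def by (simp add: sum_distrib_right)
        also have "\<dots> \<le> (\<Sum>j\<in>J. \<Sum>i<K. w i j * ((1 / p0) * compl x (p i) j))"
        proof (intro sum_mono mult_left_mono)
          fix j i assume j: "j \<in> J" and i: "i \<in> {..<K}"
          show "0 \<le> w i j" using pos i j by (auto intro: less_imp_le)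
          have "compl x (\<lambda>j. 1) j \<le> compl x (\<lambda>y. (1 / p0) * p i y) j"
            by (rule compl_mono[of J _ _ x j]) (use pb i j that p0p in auto)
          then show "compl x (\<lambda>j. 1) j \<le> (1 / p0) * compl x (p i) j" by (simp only: compl_scale)
        qed
        also have "\<dots> = (1 / p0) * (\<Sum>i<K. f i x)"
          unfolding fsw by (simp add: sum_distrib_left algebra_simps)
        finally show ?thesis .
      qed
      show ?thesis
      proof (intro conjI allI impI)
        show "feasible J prec \<pi>" using O1 by blast
        fix \<sigma> assume s: "feasible J prec \<sigma>"
        have sJ: "set \<sigma> \<subseteq> J" "set \<pi> \<subseteq> J" using s O1 by (auto simp: feasible_def)
        have "(\<Sum>i<K. f i \<pi>) \<le> P * twc J (\<lambda>j. 1) Ws \<pi>" by (rule a[OF sJ(2)])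
        also have "\<dots> \<le> P * twc J (\<lambda>j. 1) Ws \<sigma>" using O1 s Pnn by (simp add: mult_left_mono)
        also have "\<dots> \<le> P * ((1 / p0) * (\<Sum>i<K. f i \<sigma>))" using b[OF sJ(1)] Pnn by (rule mult_left_mono)
        finally show "(\<Sum>i<K. f i \<pi>) \<le> R * (\<Sum>i<K. f i \<sigma>)" by (simp add: R)
      qed
    qed
    then show "feasible J prec \<pi>" "\<And>\<sigma>. feasible J prec \<sigma> \<Longrightarrow> (\<Sum>i<K. f i \<pi>) \<le> R * (\<Sum>i<K. f i \<sigma>)"
      by auto
  qed
  have main: "OWA J K v p w \<pi> \<le> real K * R * OWA J K v p w \<sigma>" if s: "feasible J prec \<sigma>" for \<sigma>
  proof -
    have sJ: "set \<sigma> \<subseteq> J" "set \<pi> \<subseteq> J" using s feas by (auto simp: feasible_def)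
    have "OWA J K v p w \<pi> \<le> (\<Sum>i<K. f i \<pi>)"
      unfolding OWAf by (rule owa_facts(1)) (use fnn[OF sJ(2)] A in auto)
    also have "\<dots> \<le> R * (\<Sum>i<K. f i \<sigma>)" by (rule key[OF s])
    also have "\<dots> \<le> R * (real K * OWA J K v p w \<sigma>)"
      unfolding OWAf by (rule mult_left_mono[OF owa_facts(2) R0]) (use fnn[OF sJ(1)] A in auto)
    finally show ?thesis by (simp add: algebra_simps)
  qed
  show ?thesis using feas main unfolding \<pi>_def Rmin W_def w0_def P_def p0_def by (auto simp: algebra_simps)
qed

end
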